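(* There exists a two-way optical interference automaton (2OIA) that recognizes the language $\{a^nb^{2^n}\mid n\in\mathbb{N}\}$ in time $O(2^n)$ on inputs of the form $a^nb^m$.
   Context: A two-way optical interference automaton (2OIA) is a deterministic machine with finite state set $Q$, start state $q_0$, accepting and rejecting states, finite input alphabet $\Sigma$, and tape alphabet $\Gamma=\Sigma\cup\{\text{¢},\$\}$. On input $w=w_1\cdots w_N$ the read-only tape holds ¢$w_1\cdots w_N\$$ in cells $0,1,\dots,N+1$, scanned by a two-way head. For each cell $m$ there is a monochromatic point light source at the point $(m,0)$ of the plane; all sources have the same wavelength $\lambda$ and the same initial amplitude $A_0$, and each source is at any moment either switched off or switched on with initial phase $0$ or $\pi$. A detector is located at a grid point $(j,k)$ with $j,k\in\{0,\tfrac12,1,\tfrac32,\dots,N+1\}$, pointing towards the source array; its field of vision is the cone making angle $\pi/4$ with the vertical line through it, so it sees exactly the sources at $(m,0)$ with $|m-j|\le k$. The resultant wave at the detector is $\sum A_0 r_m^{-1}e^{i(\phi_m+2\pi r_m/\lambda)}$, summed over the switched-on sources it sees, where $r_m$ is the distance from the source to the detector and $\phi_m\in\{0,\pi\}$ the source's phase; the detector outputs $\underline{1}$ if this resultant is nonzero and $\underline{0}$ otherwise. The transition function $\delta:Q\times\Gamma\times\{\underline0,\underline1\}\to Q\times\{\text{left},\text{right},\text{stay}\}\times\{\text{left},\text{right},\text{up},\text{down},\text{stay}\}\times\{\mathrm{toggle}(0),\mathrm{toggle}(\pi),-\}$ maps (state, scanned symbol, detector output) to a new state, a move of the head by one cell,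 a move of the detector by one grid step (of length $1/2$), and an action on the source of the currently scanned cell: $\mathrm{toggle}(\phi)$ switches it on with phase $\phi$ if it is off and switches it off if it is on; $-$ does nothing. Initially all sources are off, the machine is in $q_0$, the head is on cell $0$, and the detector is at a prescribed initial grid position. For a given source, a maximal sequence of toggles at consecutive time steps is called non-transient if its length is odd; there is a constant $k$ such that the machine crashes if it attempts a non-transient toggle sequence on a single source for the $(k+1)$-th time. The machine accepts when it is in an accepting state with detector output $\underline0$. Its running time is the total number of moves made by the head plus the number of moves made by the detector. A 2OIA recognizes a language $L$ if it accepts every input in $L$ and rejects every input not in $L$. *)

theory Defs
  imports Complex_Main
begin

text \<open>Grid coordinates of the detector are stored in half units: the natural
  numbers J, K stand for the point (J/2, K/2).  Cells of the tape are
  0, ..., N+1 where N is the input length.\<close>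

datatype 'a tsym = Cent | Dollar | Sym 'a

datatype phase = Ph0 | PhPi

definition phase_val :: "phase \<Rightarrow> real" where
  "phase_val p = (case p of Ph0 \<Rightarrow> 0 | PhPi \<Rightarrow> pi)"

datatype hmove = HL | HR | HS
datatype dmove = DL | DR | DU | DD | DS
datatype action = Toggle phase | NoAct

text \<open>A machine: finite state set Q (states are natural numbers), start state,
  accepting and rejecting states, transition function (state, scanned symbol,
  detector output) to (state, head move, detector move, action on the scanned
  source), initial detector position (in half units), the crash constant,
  the wavelength and the common initial amplitude.\<close>
record 'a oia =
  Q :: "nat set"
  q0 :: nat
  Acc :: "nat set"
  Rej :: "nat set"
  delta :: "nat \<Rightarrow> 'a tsym \<Rightarrow> bool \<Rightarrow> nat \<times> hmove \<times> dmove \<times> action"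
  j0 :: nat
  k0 :: nat
  Kcrash :: nat
  wl :: real
  amp :: real

definition wf_oia :: "'a oia \<Rightarrow> bool" where
  "wf_oia M \<longleftrightarrow> finite (Q M) \<and> q0 M \<in> Q M \<and> Acc M \<subseteq> Q M \<and> Rej M \<subseteq> Q M
     \<and> Acc M \<inter> Rej M = {}
     \<and> (\<forall>q\<in>Q M. \<forall>s b. fst (delta M q s b) \<in> Q M)
     \<and> wl M > 0 \<and> amp M > 0"

text \<open>Configurations.  \<open>src\<close>: state of each source (None = off, Some p = on
  with phase p); \<open>cnt\<close>: number of completed non-transient toggle sequences
  per source; \<open>run\<close>: the source toggled at the previous step together with the
  length of the current maximal sequence of consecutive toggles;
  \<open>moves\<close>: number of head moves plus detector moves made so far.\<close>
record conf =
  st :: nat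
  hd :: nat
  dj :: nat
  dk :: nat
  src :: "nat \<Rightarrow> phase option"
  cnt :: "nat \<Rightarrow> nat"
  run :: "(nat \<times> nat) option"
  moves :: nat
  crashed :: bool

definition tape :: "'a list \<Rightarrow> nat \<Rightarrow> 'a tsym" where
  "tape w i = (if i = 0 then Cent else if i \<le> length w then Sym (w ! (i - 1)) else Dollar)"

definition dist_src :: "nat \<Rightarrow> nat \<Rightarrow> nat \<Rightarrow> real" where
  "dist_src m J K = sqrt ((real m - real J / 2)^2 + (real K / 2)^2)"

definition visible :: "nat \<Rightarrow> nat \<Rightarrow> nat \<Rightarrow> bool" where
  "visible m J K \<longleftrightarrow> \<bar>real m - real J / 2\<bar> \<le> real K / 2"

definition on_visible :: "'a list \<Rightarrow> conf \<Rightarrow> nat set" where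
  "on_visible w c = {m. m \<le> length w + 1 \<and> visible m (dj c) (dk c) \<and> src c m \<noteq> None}"

definition resultant :: "'a oia \<Rightarrow> 'a list \<Rightarrow> conf \<Rightarrow> complex" where
  "resultant M w c = (\<Sum>m\<in>on_visible w c.
      complex_of_real (amp M / dist_src m (dj c) (dk c))
      * cis (phase_val (the (src c m)) + 2 * pi * dist_src m (dj c) (dk c) / wl M))"

text \<open>Detector output (True = \<open>1\<close>, False = \<open>0\<close>).  A switched-on source located at
  the detector itself produces an unbounded (hence nonzero) field.\<close>
definition out :: "'a oia \<Rightarrow> 'a list \<Rightarrow> conf \<Rightarrow> bool" where
  "out M w c \<longleftrightarrow> (\<exists>m\<in>on_visible w c. dist_src m (dj c) (dk c) = 0) \<or> resultant M w c \<noteq> 0"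

definition close_run :: "(nat \<Rightarrow> nat) \<Rightarrow> (nat \<times> nat) option \<Rightarrow> (nat \<Rightarrow> nat)" where
  "close_run f r = (case r of None \<Rightarrow> f
     | Some (s, l) \<Rightarrow> if odd l then f(s := f s + 1) else f)"

definition halting :: "'a oia \<Rightarrow> conf \<Rightarrow> bool" where
  "halting M c \<longleftrightarrow> crashed c \<or> st c \<in> Acc M \<or> st c \<in> Rej M"

definition hmove_to :: "nat \<Rightarrow> hmove \<Rightarrow> nat \<Rightarrow> nat option" where
  "hmove_to B mv h = (case mv of
      HL \<Rightarrow> if h = 0 then None else Some (h - 1)
    | HR \<Rightarrow> if h \<ge> B then None else Some (h + 1)
    | HS \<Rightarrow> Some h)"

definition dmove_to :: "nat \<Rightarrow> dmove \<Rightarrow> nat \<times> nat \<Rightarrow> (nat \<times> nat) option" where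
  "dmove_to B mv p = (case p of (j, k) \<Rightarrow> (case mv of
      DL \<Rightarrow> if j = 0 then None else Some (j - 1, k)
    | DR \<Rightarrow> if j \<ge> B then None else Some (j + 1, k)
    | DD \<Rightarrow> if k = 0 then None else Some (j, k - 1)
    | DU \<Rightarrow> if k \<ge> B then None else Some (j, k + 1)
    | DS \<Rightarrow> Some (j, k)))"

definition step :: "'a oia \<Rightarrow> 'a list \<Rightarrow> conf \<Rightarrow> conf" where
  "step M w c = (
     let N = length w;
         (q', hm, dm, a) = delta M (st c) (tape w (hd c)) (out M w c);
         s = hd c;
         (src', run', cnt') = (case a of
             NoAct \<Rightarrow> (src c, None, close_run (cnt c) (run c))
           | Toggle ph \<Rightarrow>
               ((src c)(s := (if src c s = None then Some ph else None)),
                (case run c of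
                   None \<Rightarrow> (Some (s, 1), cnt c)
                 | Some (s0, l) \<Rightarrow> if s0 = s then (Some (s, l + 1), cnt c)
                                   else (Some (s, 1), close_run (cnt c) (run c)))));
         (run'', cnt'') = (if q' \<in> Acc M \<or> q' \<in> Rej M
                           then (None, close_run cnt' run') else (run', cnt'))
     in case (hmove_to (N + 1) hm (hd c), dmove_to (2 * (N + 1)) dm (dj c, dk c)) of
          (Some h', Some (j', k')) \<Rightarrow>
             c\<lparr> st := q', hd := h', dj := j', dk := k', src := src', cnt := cnt'',
                run := run'',
                moves := moves c + (if hm = HS then 0 else 1) + (if dm = DS then 0 else 1),
                crashed := (\<exists>x. cnt'' x > Kcrash M) \<rparr>
        | _ \<Rightarrow> c\<lparr> crashed := True \<rparr>)"

definition init :: "'a oia \<Rightarrow> 'a list \<Rightarrow> conf" where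
  "init M w = \<lparr> st = q0 M, hd = 0, dj = j0 M, dk = k0 M, src = (\<lambda>_. None),
     cnt = (\<lambda>_. 0), run = None, moves = 0,
     crashed = (j0 M > 2 * (length w + 1) \<or> k0 M > 2 * (length w + 1)) \<rparr>"

fun exec :: "'a oia \<Rightarrow> 'a list \<Rightarrow> nat \<Rightarrow> conf" where
  "exec M w 0 = init M w"
| "exec M w (Suc t) = (let c = exec M w t in if halting M c then c else step M w c)"

definition accepting_conf :: "'a oia \<Rightarrow> 'a list \<Rightarrow> conf \<Rightarrow> bool" where
  "accepting_conf M w c \<longleftrightarrow> \<not> crashed c \<and> st c \<in> Acc M \<and> \<not> out M w c"

definition accepts :: "'a oia \<Rightarrow> 'a list \<Rightarrow> bool" where
  "accepts M w \<longleftrightarrow> (\<exists>t. halting M (exec M w t) \<and> accepting_conf M w (exec M w t))"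

definition rejects :: "'a oia \<Rightarrow> 'a list \<Rightarrow> bool" where
  "rejects M w \<longleftrightarrow> (\<exists>t. halting M (exec M w t) \<and> \<not> accepting_conf M w (exec M w t))"

definition recognizes :: "'a oia \<Rightarrow> 'a list set \<Rightarrow> bool" where
  "recognizes M L \<longleftrightarrow> (\<forall>w. (w \<in> L \<longrightarrow> accepts M w) \<and> (w \<notin> L \<longrightarrow> rejects M w))"

definition runs_within :: "'a oia \<Rightarrow> 'a list \<Rightarrow> nat \<Rightarrow> bool" where
  "runs_within M w T \<longleftrightarrow> (\<exists>t. halting M (exec M w t) \<and> moves (exec M w t) \<le> T)"

datatype ab = La | Lb

end

theory Submission imports Defs begin

definition mst :: "nat set \<Rightarrow> nat \<Rightarrow> phase option" where
  "mst S = (\<lambda>x. if x \<in> S then Some Ph0 else None)"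
definition cntf :: "nat set \<Rightarrow> nat set \<Rightarrow> nat \<Rightarrow> nat" where
  "cntf C D = (\<lambda>x. if x \<in> D then 2 else if x \<in> C then 1 else 0)"
definition gc :: "nat \<Rightarrow> nat \<Rightarrow> nat \<Rightarrow> nat set \<Rightarrow> nat set \<Rightarrow> nat set \<Rightarrow> (nat \<times> nat) option \<Rightarrow> nat \<Rightarrow> conf" where
  "gc q h j S C D r mv = \<lparr>st = q, hd = h, dj = j, dk = 0, src = mst S, cnt = cntf C D, run = r,
     moves = mv, crashed = False\<rparr>"

definition dl :: "nat \<Rightarrow> ab tsym \<Rightarrow> bool \<Rightarrow> nat \<times> hmove \<times> dmove \<times> action" where
  "dl q s ob = (let R = (25, HS, DS, NoAct) in
     if q = 0 then (1, HR, DS, NoAct)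
     else if q = 1 then (if s = Sym La then (2, HR, DS, NoAct) else if s = Sym Lb then (3, HR, DS, NoAct) else R)
     else if q = 2 then (if s = Sym La then (2, HR, DS, NoAct) else if s = Sym Lb then (4, HR, DS, Toggle Ph0) else R)
     else if q = 3 then (if s = Dollar then (24, HS, DS, NoAct) else R)
     else if q = 4 then (if s = Sym Lb then (5, HS, DS, NoAct) else R)
     else if q = 5 then (6, HL, DS, Toggle Ph0)
     else if q = 6 then (7, HL, DS, NoAct)
     else if q = 7 then (8, HS, DR, Toggle Ph0)
     else if q = 8 then (9, HS, DR, NoAct)
     else if q = 9 then (if ob then (10, HS, DS, NoAct) else (8, HS, DR, NoAct))
     else if q = 10 then (if ob then (11, HL, DL, NoAct) else if s = Cent then (19, HR, DR, NoAct)
                          else if s = Sym La then (12, HR, DR, Toggle Ph0) else R)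
     else if q = 11 then (10, HS, DL, NoAct)
     else if q = 12 then (13, HS, DR, NoAct)
     else if q = 13 then (if s = Sym La then (12, HR, DR, NoAct)
                          else if s = Sym Lb then (if ob then (14, HR, DR, Toggle Ph0) else (12, HR, DR, NoAct)) else R)
     else if q = 14 then (if s = Sym Lb then (15, HR, DR, NoAct) else R)
     else if q = 15 then (if s = Sym Lb then (16, HR, DS, NoAct) else R)
     else if q = 16 then (if s = Sym Lb then (if ob then (17, HL, DS, Toggle Ph0) else (14, HR, DR, NoAct)) else R)
     else if q = 17 then (if s = Sym Lb then (17, HL, DS, NoAct) else if s = Sym La then (18, HS, DL, NoAct) else R)
     else if q = 18 then (22, HS, DL, NoAct)
     else if q = 22 then (if ob then (10, HS, DS, NoAct) else (18, HS, DL, NoAct))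
     else if q = 19 then (20, HS, DR, NoAct)
     else if q = 20 then (if s = Sym La then (19, HR, DR, NoAct)
                          else if s = Sym Lb then (if ob then (21, HR, DR, NoAct) else (19, HR, DR, NoAct)) else R)
     else if q = 21 then (23, HS, DR, NoAct)
     else if q = 23 then (if s = Sym Lb then (if ob then (26, HR, DR, NoAct) else (21, HR, DR, NoAct)) else R)
     else if q = 26 then (if s = Dollar then (24, HS, DS, NoAct) else R)
     else R)"

definition MM :: "ab oia" where
  "MM = \<lparr>Q = {..26}, q0 = 0, Acc = {24}, Rej = {25}, delta = dl, j0 = 0, k0 = 0, Kcrash = 2,
     wl = 1, amp = 1\<rparr>"

lemma out_K0:
  assumes "dk c = 0"
  shows "out M w c \<longleftrightarrow> (even (dj c) \<and> dj c div 2 \<le> length w + 1 \<and> src c (dj c div 2) \<noteq> None)"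
proof -
  have vis: "visible m (dj c) 0 \<longleftrightarrow> dj c = 2 * m" for m
    unfolding visible_def by auto
  have ov: "on_visible w c = {m. m \<le> length w + 1 \<and> dj c = 2 * m \<and> src c m \<noteq> None}"
    unfolding on_visible_def using vis assms by auto
  show ?thesis
  proof (cases "even (dj c) \<and> dj c div 2 \<le> length w + 1 \<and> src c (dj c div 2) \<noteq> None")
    case True
    then have "dj c div 2 \<in> on_visible w c" unfolding ov by auto
    moreover have "dist_src (dj c div 2) (dj c) (dk c) = 0"
      using True assms unfolding dist_src_def by (auto elim!: evenE)
    ultimately show ?thesis using True unfolding out_def by blast
  next
    case False
    then have "on_visible w c = {}" unfolding ov by auto
    then show ?thesis using False unfolding out_def resultant_def by simp
  qed
qed

definition mc :: "hmove \<Rightarrow> dmove \<Rightarrow> nat" where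
  "mc hm dm = (if hm = HS then 0 else 1) + (if dm = DS then 0 else 1)"

definition hf :: "hmove \<Rightarrow> nat \<Rightarrow> nat" where
  "hf hm h = (case hm of HL \<Rightarrow> h - 1 | HR \<Rightarrow> h + 1 | HS \<Rightarrow> h)"
definition hok :: "nat \<Rightarrow> hmove \<Rightarrow> nat \<Rightarrow> bool" where
  "hok B hm h = (case hm of HL \<Rightarrow> 0 < h | HR \<Rightarrow> h < B | HS \<Rightarrow> True)"
definition df :: "dmove \<Rightarrow> nat \<Rightarrow> nat" where
  "df dm j = (case dm of DL \<Rightarrow> j - 1 | DR \<Rightarrow> j + 1 | _ \<Rightarrow> j)"
definition dok :: "nat \<Rightarrow> dmove \<Rightarrow> nat \<Rightarrow> bool" where
  "dok B dm j = (case dm of DL \<Rightarrow> 0 < j | DR \<Rightarrow> j < B | DS \<Rightarrow> True | _ \<Rightarrow> False)"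

lemma hmove_ok: "hok B hm h \<Longrightarrow> hmove_to B hm h = Some (hf hm h)"
  by (cases hm) (auto simp: hok_def hmove_to_def hf_def)
lemma dmove_ok: "dok B dm j \<Longrightarrow> dmove_to B dm (j, 0) = Some (df dm j, 0)"
  by (cases dm) (auto simp: dok_def dmove_to_def df_def)

lemma mvs_simps [simp]: "hf HL h = h - 1" "hf HR h = Suc h" "hf HS h = h"
  "df DL j = j - 1" "df DR j = Suc j" "df DS j = j"
  "hok B HL h = (0 < h)" "hok B HR h = (h < B)" "hok B HS h = True"
  "dok B DL j = (0 < j)" "dok B DR j = (j < B)" "dok B DS j = True"
  "mc HL DL = 2" "mc HL DR = 2" "mc HR DL = 2" "mc HR DR = 2"
  "mc HS DL = 1" "mc HS DR = 1" "mc HL DS = 1" "mc HR DS = 1" "mc HS DS = 0"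
  by (simp_all add: hf_def df_def hok_def dok_def mc_def)

lemma cntf_le: "\<not> (\<exists>x. 2 < cntf C D x)"
  by (simp add: cntf_def)

lemma step_plain:
  assumes "dl q (tape w h) (out MM w (gc q h j S C D None mv)) = (q', hm, dm, NoAct)"
    "hmove_to (length w + 1) hm h = Some h'"
    "dmove_to (2 * (length w + 1)) dm (j, 0) = Some (j', 0)"
  shows "step MM w (gc q h j S C D None mv) = gc q' h' j' S C D None (mv + mc hm dm)"
  using assms unfolding step_def
  by (simp add: gc_def MM_def Let_def close_run_def cntf_le mc_def)

lemma step_tog:
  assumes "dl q (tape w h) (out MM w (gc q h j S C D None mv)) = (q', hm, dm, Toggle Ph0)"
    "hmove_to (length w + 1) hm h = Some h'"
    "dmove_to (2 * (length w + 1)) dm (j, 0) = Some (j', 0)"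
    "q' \<noteq> 24" "q' \<noteq> 25"
    "S' = (if h \<in> S then S - {h} else insert h S)"
  shows "step MM w (gc q h j S C D None mv) = gc q' h' j' S' C D (Some (h, 1)) (mv + mc hm dm)"
  using assms unfolding step_def
  by (auto simp add: gc_def MM_def Let_def close_run_def cntf_le mc_def mst_def fun_eq_iff)

lemma step_close:
  assumes "dl q (tape w h) (out MM w (gc q h j S C D (Some (s, 1)) mv)) = (q', hm, dm, NoAct)"
    "hmove_to (length w + 1) hm h = Some h'"
    "dmove_to (2 * (length w + 1)) dm (j, 0) = Some (j', 0)"
    "(cntf C D)(s := Suc (cntf C D s)) = cntf C' D'"
  shows "step MM w (gc q h j S C D (Some (s, 1)) mv) = gc q' h' j' S C' D' None (mv + mc hm dm)"
  using assms unfolding step_def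
  by (simp add: gc_def MM_def Let_def close_run_def cntf_le mc_def)

definition nxt :: "'a oia \<Rightarrow> 'a list \<Rightarrow> conf \<Rightarrow> conf" where
  "nxt M w c = (if halting M c then c else step M w c)"

lemma exec_nxt: "exec M w t = (nxt M w ^^ t) (init M w)"
  by (induction t) (simp_all add: nxt_def Let_def)

definition reach :: "'a oia \<Rightarrow> 'a list \<Rightarrow> conf \<Rightarrow> conf \<Rightarrow> bool" where
  "reach M w c c' \<longleftrightarrow> (\<exists>t. (nxt M w ^^ t) c = c')"

lemma reach_refl: "reach M w c c"
  unfolding reach_def by (rule exI[of _ 0]) simp

lemma reach_trans: "reach M w c1 c2 \<Longrightarrow> reach M w c2 c3 \<Longrightarrow> reach M w c1 c3"
  unfolding reach_def by (metis funpow_add comp_apply)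

lemma reach_step: "\<not> halting M c \<Longrightarrow> reach M w (step M w c) c' \<Longrightarrow> reach M w c c'"
  unfolding reach_def
  by (metis (no_types, lifting) comp_apply funpow_Suc_right nxt_def)

lemma halting_gc: "halting MM (gc q h j S C D r mv) \<longleftrightarrow> q = 24 \<or> q = 25"
  by (simp add: halting_def gc_def MM_def)

lemma out_gc: "out MM w (gc q h j S C D r mv) \<longleftrightarrow> (even j \<and> j div 2 \<le> length w + 1 \<and> j div 2 \<in> S)"
  by (subst out_K0) (auto simp: gc_def mst_def)

lemma rs_plain:
  assumes "dl q (tape w h) (out MM w (gc q h j S C D None mv)) = (q', hm, dm, NoAct)"
    "hok (length w + 1) hm h \<and> dok (2 * (length w + 1)) dm j \<and> q \<noteq> 24 \<and> q \<noteq> 25"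
    "reach MM w (gc q' (hf hm h) (df dm j) S C D None (mv + mc hm dm)) c'"
  shows "reach MM w (gc q h j S C D None mv) c'"
proof -
  have "step MM w (gc q h j S C D None mv) = gc q' (hf hm h) (df dm j) S C D None (mv + mc hm dm)"
    using assms(2) by (intro step_plain[OF assms(1)] hmove_ok dmove_ok) auto
  then show ?thesis using assms(2,3) reach_step[of MM "gc q h j S C D None mv" w c'] by (simp add: halting_gc)
qed

lemma rs_tog:
  assumes "dl q (tape w h) (out MM w (gc q h j S C D None mv)) = (q', hm, dm, Toggle Ph0)"
    "hok (length w + 1) hm h \<and> dok (2 * (length w + 1)) dm j \<and> q \<noteq> 24 \<and> q \<noteq> 25 \<and> q' \<noteq> 24 \<and> q' \<noteq> 25"
    "reach MM w (gc q' (hf hm h) (df dm j) (if h \<in> S then S - {h} else insert h S) C D (Some (h, 1)) (mv + mc hm dm)) c'"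
  shows "reach MM w (gc q h j S C D None mv) c'"
proof -
  have "step MM w (gc q h j S C D None mv) = gc q' (hf hm h) (df dm j) (if h \<in> S then S - {h} else insert h S) C D (Some (h, 1)) (mv + mc hm dm)"
    using assms(2) by (intro step_tog[OF assms(1)] hmove_ok dmove_ok) auto
  then show ?thesis using assms(2,3) reach_step[of MM "gc q h j S C D None mv" w c'] by (simp add: halting_gc)
qed

lemma rs_close_mark:
  assumes "dl q (tape w h) (out MM w (gc q h j S C D (Some (s, 1)) mv)) = (q', hm, dm, NoAct)"
    "hok (length w + 1) hm h \<and> dok (2 * (length w + 1)) dm j \<and> q \<noteq> 24 \<and> q \<noteq> 25 \<and> s \<notin> C \<and> s \<notin> D"
    "reach MM w (gc q' (hf hm h) (df dm j) S (insert s C) D None (mv + mc hm dm)) c'"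
  shows "reach MM w (gc q h j S C D (Some (s, 1)) mv) c'"
proof -
  have e: "(cntf C D)(s := Suc (cntf C D s)) = cntf (insert s C) D"
    using assms(2) by (auto simp: cntf_def fun_eq_iff)
  have "step MM w (gc q h j S C D (Some (s, 1)) mv) = gc q' (hf hm h) (df dm j) S (insert s C) D None (mv + mc hm dm)"
    using assms(2) by (intro step_close[OF assms(1) _ _ e] hmove_ok dmove_ok) auto
  then show ?thesis using assms(2,3) reach_step[of MM "gc q h j S C D (Some (s, 1)) mv" w c'] by (simp add: halting_gc)
qed

lemma rs_close_unmark:
  assumes "dl q (tape w h) (out MM w (gc q h j S C D (Some (s, 1)) mv)) = (q', hm, dm, NoAct)"
    "hok (length w + 1) hm h \<and> dok (2 * (length w + 1)) dm j \<and> q \<noteq> 24 \<and> q \<noteq> 25 \<and> s \<in> C \<and> s \<notin> D"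
    "reach MM w (gc q' (hf hm h) (df dm j) S (C - {s}) (insert s D) None (mv + mc hm dm)) c'"
  shows "reach MM w (gc q h j S C D (Some (s, 1)) mv) c'"
proof -
  have e: "(cntf C D)(s := Suc (cntf C D s)) = cntf (C - {s}) (insert s D)"
    using assms(2) by (auto simp: cntf_def fun_eq_iff)
  have "step MM w (gc q h j S C D (Some (s, 1)) mv) = gc q' (hf hm h) (df dm j) S (C - {s}) (insert s D) None (mv + mc hm dm)"
    using assms(2) by (intro step_close[OF assms(1) _ _ e] hmove_ok dmove_ok) auto
  then show ?thesis using assms(2,3) reach_step[of MM "gc q h j S C D (Some (s, 1)) mv" w c'] by (simp add: halting_gc)
qed

definition RJ :: "ab list \<Rightarrow> conf \<Rightarrow> nat \<Rightarrow> bool" where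
  "RJ w c B \<longleftrightarrow> (\<exists>c'. reach MM w c c' \<and> halting MM c' \<and> \<not> accepting_conf MM w c' \<and> moves c' \<le> B)"

lemma RJ_reach: "reach MM w c c1 \<Longrightarrow> RJ w c1 B \<Longrightarrow> RJ w c B"
  unfolding RJ_def using reach_trans by blast

lemma RJ_mono: "RJ w c B \<Longrightarrow> B \<le> B' \<Longrightarrow> RJ w c B'"
  unfolding RJ_def using le_trans by blast

lemma step_rej:
  assumes "dl (st c) (tape w (hd c)) (out MM w c) = (25, HS, DS, NoAct)"
  shows "halting MM (step MM w c) \<and> \<not> accepting_conf MM w (step MM w c) \<and> moves (step MM w c) = moves c"
  using assms unfolding step_def
  by (simp add: MM_def Let_def halting_def accepting_conf_def hmove_to_def dmove_to_def)

lemma rj_gc: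
  assumes "dl q (tape w h) (out MM w (gc q h j S C D r mv)) = (25, HS, DS, NoAct)"
    "q \<noteq> 24 \<and> q \<noteq> 25 \<and> mv \<le> B"
  shows "RJ w (gc q h j S C D r mv) B"
proof -
  let ?c = "gc q h j S C D r mv"
  have st: "st ?c = q" "hd ?c = h" "moves ?c = mv" by (simp_all add: gc_def)
  have h: "halting MM (step MM w ?c) \<and> \<not> accepting_conf MM w (step MM w ?c) \<and> moves (step MM w ?c) = moves ?c"
    by (rule step_rej) (simp only: st assms(1))
  have nh: "\<not> halting MM ?c" using assms(2) by (simp add: halting_gc)
  have "reach MM w ?c (step MM w ?c)" by (rule reach_step[OF nh reach_refl])
  then show ?thesis unfolding RJ_def using h st assms(2) by auto
qed

lemma reach_gc_eq: "q = q' \<Longrightarrow> h = h' \<Longrightarrow> j = j' \<Longrightarrow> S = S' \<Longrightarrow> C = C' \<Longrightarrow> D = D' \<Longrightarrow> r = r' \<Longrightarrow> mv = mv'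
  \<Longrightarrow> reach M w (gc q h j S C D r mv) (gc q' h' j' S' C' D' r' mv')"
  by (simp add: reach_refl)

lemma tape0 [simp]: "tape w 0 = Cent"
  by (simp add: tape_def)

lemmas dlo = dl_def out_gc

lemma loop2:
  assumes "\<And>x. p \<le> x \<Longrightarrow> x < p + t \<Longrightarrow> tape w x = Sym La" "p + t \<le> length w + 1"
    "p' = p + t" "mv' = mv + t"
  shows "reach MM w (gc 2 p 0 S C D None mv) (gc 2 p' 0 S C D None mv')"
  using assms
proof (induction t arbitrary: p mv)
  case 0 then show ?case by (simp add: reach_refl)
next
  case (Suc t)
  have "tape w p = Sym La" using Suc.prems by simp
  with Suc.prems show ?case
    apply -
    apply (rule rs_plain, simp add: dlo, simp)
    apply (simp (no_asm) only: mvs_simps, rule Suc.IH; simp)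
    done
qed

lemma loop9:
  assumes "\<And>x. d \<le> x \<Longrightarrow> x < d + t \<Longrightarrow> x \<notin> S" "d + t \<le> length w"
    "j = 2 * d" "j' = 2 * (d + t)" "mv' = mv + 2 * t"
  shows "reach MM w (gc 9 h j S C D None mv) (gc 9 h j' S C D None mv')"
  using assms
proof (induction t arbitrary: d j mv)
  case 0 then show ?case by (simp add: reach_refl)
next
  case (Suc t)
  have "d \<notin> S" using Suc.prems by simp
  with Suc.prems show ?case
    apply -
    apply (rule rs_plain, simp add: dlo, simp)
    apply (rule rs_plain, simp add: dlo, simp)
    apply (simp (no_asm) only: mvs_simps, rule Suc.IH[of "Suc d"]; simp)
    done
qed

lemma loopC:
  assumes "\<And>x. b < x \<Longrightarrow> x \<le> b + t \<Longrightarrow> x \<in> S" "b + t \<le> length w"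
    "h = b + t" "j = 2 * h" "j' = 2 * b" "mv' = mv + 3 * t"
  shows "reach MM w (gc 10 h j S C D None mv) (gc 10 b j' S C D None mv')"
  using assms
proof (induction t arbitrary: h j mv)
  case 0 then show ?case by (simp add: reach_refl)
next
  case (Suc t)
  have "Suc (b + t) \<in> S" using Suc.prems by simp
  with Suc.prems show ?case
    apply -
    apply (rule rs_plain, simp add: dlo, simp)
    apply (rule rs_plain, simp add: dlo, simp)
    apply (simp (no_asm) only: mvs_simps, rule Suc.IH; simp)
    done
qed

lemma loopF:
  assumes "\<And>x. p \<le> x \<Longrightarrow> x < p + t \<Longrightarrow> tape w x = Sym La \<or> (tape w x = Sym Lb \<and> x \<notin> S)"
    "p + t \<le> length w" "j = 2 * p" "p' = p + t" "j' = 2 * p'" "mv' = mv + 3 * t"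
  shows "reach MM w (gc 13 p j S C D None mv) (gc 13 p' j' S C D None mv')"
  using assms
proof (induction t arbitrary: p j mv)
  case 0 then show ?case by (simp add: reach_refl)
next
  case (Suc t)
  have hp: "tape w p = Sym La \<or> (tape w p = Sym Lb \<and> p \<notin> S)" using Suc.prems by simp
  have e: "dl 13 (tape w p) (out MM w (gc 13 p j S C D None mv)) = (12, HR, DR, NoAct)"
    using hp Suc.prems(2,3) by (auto simp: dlo)
  from Suc.prems show ?case
    apply -
    apply (rule rs_plain[OF e], simp)
    apply (rule rs_plain, simp add: dlo, simp)
    apply (simp (no_asm) only: mvs_simps, rule Suc.IH[of "Suc p"]; simp)
    done
qed

lemma loopG2:
  assumes "\<And>x. p \<le> x \<Longrightarrow> x < p + t \<Longrightarrow> tape w x = Sym La \<or> (tape w x = Sym Lb \<and> x \<notin> S)"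
    "p + t \<le> length w" "j = 2 * p" "p' = p + t" "j' = 2 * p'" "mv' = mv + 3 * t"
  shows "reach MM w (gc 20 p j S C D None mv) (gc 20 p' j' S C D None mv')"
  using assms
proof (induction t arbitrary: p j mv)
  case 0 then show ?case by (simp add: reach_refl)
next
  case (Suc t)
  have hp: "tape w p = Sym La \<or> (tape w p = Sym Lb \<and> p \<notin> S)" using Suc.prems by simp
  have e: "dl 20 (tape w p) (out MM w (gc 20 p j S C D None mv)) = (19, HR, DR, NoAct)"
    using hp Suc.prems(2,3) by (auto simp: dlo)
  from Suc.prems show ?case
    apply -
    apply (rule rs_plain[OF e], simp)
    apply (rule rs_plain, simp add: dlo, simp)
    apply (simp (no_asm) only: mvs_simps, rule Suc.IH[of "Suc p"]; simp)
    done
qed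

lemma loopG3:
  assumes "\<And>x. p \<le> x \<Longrightarrow> x < p + t \<Longrightarrow> tape w x = Sym Lb \<and> x \<notin> S"
    "p + t \<le> length w" "j = 2 * p" "p' = p + t" "j' = 2 * p'" "mv' = mv + 3 * t"
  shows "reach MM w (gc 23 p j S C D None mv) (gc 23 p' j' S C D None mv')"
  using assms
proof (induction t arbitrary: p j mv)
  case 0 then show ?case by (simp add: reach_refl)
next
  case (Suc t)
  have "tape w p = Sym Lb \<and> p \<notin> S" using Suc.prems by simp
  with Suc.prems show ?case
    apply -
    apply (rule rs_plain, simp add: dlo, simp)
    apply (rule rs_plain, simp add: dlo, simp)
    apply (simp (no_asm) only: mvs_simps, rule Suc.IH[of "Suc p"]; simp)
    done
qed

lemma loopE:
  assumes "\<And>x. d \<le> x \<Longrightarrow> x < d + t \<Longrightarrow> x \<notin> S" "\<And>x. h \<le> x \<Longrightarrow> x < h + 3 * t \<Longrightarrow> tape w x = Sym Lb"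
    "h + 3 * t \<le> length w + 1" "d + t \<le> length w" "j = 2 * d" "h' = h + 3 * t" "j' = 2 * (d + t)"
    "mv' = mv + 5 * t"
  shows "reach MM w (gc 16 h j S C D None mv) (gc 16 h' j' S C D None mv')"
  using assms
proof (induction t arbitrary: h d j mv)
  case 0 then show ?case by (simp add: reach_refl)
next
  case (Suc t)
  have "d \<notin> S \<and> tape w h = Sym Lb \<and> tape w (Suc h) = Sym Lb \<and> tape w (Suc (Suc h)) = Sym Lb"
    using Suc.prems(1)[of d] Suc.prems(2)[of h] Suc.prems(2)[of "Suc h"] Suc.prems(2)[of "Suc (Suc h)"] by simp
  with Suc.prems show ?case
    apply -
    apply (rule rs_plain, simp add: dlo, simp)
    apply (rule rs_plain, simp add: dlo, simp)
    apply (rule rs_plain, simp add: dlo, simp)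
    apply (simp (no_asm) only: mvs_simps, rule Suc.IH[where d="Suc d"])
    apply simp_all
    done
qed

lemma loopB1:
  assumes "\<And>x. b < x \<Longrightarrow> x \<le> b + t \<Longrightarrow> tape w x = Sym Lb" "b + t \<le> length w"
    "h = b + t" "mv' = mv + t"
  shows "reach MM w (gc 17 h j S C D None mv) (gc 17 b j S C D None mv')"
  using assms
proof (induction t arbitrary: h mv)
  case 0 then show ?case by (simp add: reach_refl)
next
  case (Suc t)
  have "tape w (Suc (b + t)) = Sym Lb" using Suc.prems by simp
  with Suc.prems show ?case
    apply -
    apply (rule rs_plain, simp add: dlo, simp)
    apply (simp (no_asm) only: mvs_simps, rule Suc.IH; simp)
    done
qed

lemma loopB2:
  assumes "\<And>x. b < x \<Longrightarrow> x \<le> b + t \<Longrightarrow> x \<notin> S" "b + t \<le> length w"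
    "j = 2 * (b + t)" "j' = 2 * b" "mv' = mv + 2 * t"
  shows "reach MM w (gc 22 h j S C D None mv) (gc 22 h j' S C D None mv')"
  using assms
proof (induction t arbitrary: j mv)
  case 0 then show ?case by (simp add: reach_refl)
next
  case (Suc t)
  have "Suc (b + t) \<notin> S" using Suc.prems by simp
  with Suc.prems show ?case
    apply -
    apply (rule rs_plain, simp add: dlo, simp)
    apply (rule rs_plain, simp add: dlo, simp)
    apply (simp (no_asm) only: mvs_simps, rule Suc.IH; simp)
    done
qed

lemmas RJ_plain = RJ_reach[OF rs_plain[OF _ _ reach_refl]]
lemmas RJ_tog = RJ_reach[OF rs_tog[OF _ _ reach_refl]]
lemmas RJ_close_mark = RJ_reach[OF rs_close_mark[OF _ _ reach_refl]]
lemmas RJ_close_unmark = RJ_reach[OF rs_close_unmark[OF _ _ reach_refl]]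

definition AC :: "ab list \<Rightarrow> conf \<Rightarrow> nat \<Rightarrow> bool" where
  "AC w c B \<longleftrightarrow> (\<exists>c'. reach MM w c c' \<and> halting MM c' \<and> accepting_conf MM w c' \<and> moves c' \<le> B)"

lemma AC_reach: "reach MM w c c1 \<Longrightarrow> AC w c1 B \<Longrightarrow> AC w c B"
  unfolding AC_def using reach_trans by blast

lemma ext_ok:
  assumes "q \<in> S" "q \<notin> D" "q + g \<in> S" "\<And>x. q < x \<Longrightarrow> x < q + g \<Longrightarrow> x \<notin> S" "1 \<le> g"
    "q + 3 * g \<notin> S" "q + 3 * g \<notin> D" "\<And>x. q \<le> x \<Longrightarrow> x \<le> q + 3 * g \<Longrightarrow> tape w x = Sym Lb"
    "q + 3 * g \<le> length w"
  shows "reach MM w (gc 13 q (2 * q) S S D None mv)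
    (gc 17 (q + 3 * g - 2) (2 * (q + g)) (insert (q + 3 * g) (S - {q})) (insert (q + 3 * g) (S - {q}))
       (insert q D) None (mv + 5 * g + 2))"
proof -
  have t: "tape w q = Sym Lb" "tape w (Suc q) = Sym Lb" "tape w (Suc (Suc q)) = Sym Lb"
    "tape w (q + 3 * g) = Sym Lb" "tape w (q + 3 * g - 1) = Sym Lb"
    using assms(8)[of q] assms(8)[of "Suc q"] assms(8)[of "Suc (Suc q)"] assms(8)[of "q + 3 * g"]
      assms(8)[of "q + 3 * g - 1"] assms(5) by simp_all
  have r1: "reach MM w (gc 13 q (2 * q) S S D None mv) (gc 16 (q + 3) (2 * (q + 1)) (S - {q}) (S - {q}) (insert q D) None (mv + 5))"
    using assms t
    apply -
    apply (rule rs_tog, simp add: dlo, simp)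
    apply (rule rs_close_unmark, simp add: dlo, simp)
    apply (rule rs_plain, simp add: dlo, simp)
    apply (rule reach_gc_eq; simp)
    done
  have r2: "reach MM w (gc 16 (q + 3) (2 * (q + 1)) (S - {q}) (S - {q}) (insert q D) None (mv + 5))
     (gc 16 (q + 3 * g) (2 * (q + g)) (S - {q}) (S - {q}) (insert q D) None (mv + 5 * g))"
    apply (rule loopE[where t = "g - 1" and d = "q + 1"])
    subgoal for x using assms(4)[of x] assms(5) by simp
    subgoal for x using assms(8)[of x] assms(5) by simp
    using assms(5,9) by simp_all
  have r3: "reach MM w (gc 16 (q + 3 * g) (2 * (q + g)) (S - {q}) (S - {q}) (insert q D) None (mv + 5 * g))
    (gc 17 (q + 3 * g - 2) (2 * (q + g)) (insert (q + 3 * g) (S - {q})) (insert (q + 3 * g) (S - {q}))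
       (insert q D) None (mv + 5 * g + 2))"
    using assms t
    apply -
    apply (rule rs_tog, simp add: dlo, simp)
    apply (rule rs_close_mark, simp add: dlo, simp)
    apply (rule reach_gc_eq; simp)
    done
  show ?thesis using reach_trans[OF reach_trans[OF r1 r2] r3] .
qed

lemma ext_rej:
  assumes "q \<in> S" "q \<notin> D" "q + g \<in> S" "\<And>x. q < x \<Longrightarrow> x < q + g \<Longrightarrow> x \<notin> S" "1 \<le> g"
    "q < s" "s \<le> q + 3 * g" "\<And>x. q \<le> x \<Longrightarrow> x < s \<Longrightarrow> tape w x = Sym Lb" "tape w s \<noteq> Sym Lb"
    "s \<le> length w + 1"
  shows "RJ w (gc 13 q (2 * q) S S D None mv) (mv + 5 * g + 4)"
proof -
  have tq: "tape w q = Sym Lb" using assms(8)[of q] assms(6) by simp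
  have c1: "s = Suc q \<or> s = Suc (Suc q) \<or> q + 3 \<le> s" using assms(6) by auto
  moreover
  { assume s: "s = Suc q"
    have ?thesis using assms tq s
      apply -
      apply (rule RJ_tog, simp add: dlo, simp)
      apply (rule rj_gc, simp add: dlo, simp)
      done }
  moreover
  { assume s: "s = Suc (Suc q)"
    have t1: "tape w (Suc q) = Sym Lb" using assms(8)[of "Suc q"] s by simp
    have ?thesis using assms tq s t1
      apply -
      apply (rule RJ_tog, simp add: dlo, simp)
      apply (rule RJ_close_unmark, simp add: dlo, simp)
      apply (rule rj_gc, simp add: dlo, simp)
      done }
  moreover
  { assume s: "q + 3 \<le> s"
    have t: "tape w (Suc q) = Sym Lb" "tape w (Suc (Suc q)) = Sym Lb"
      using assms(8)[of "Suc q"] assms(8)[of "Suc (Suc q)"] s by simp_all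
    have r1: "reach MM w (gc 13 q (2 * q) S S D None mv) (gc 16 (q + 3) (2 * (q + 1)) (S - {q}) (S - {q}) (insert q D) None (mv + 5))"
      using assms t tq s
      apply -
      apply (rule rs_tog, simp add: dlo, simp)
      apply (rule rs_close_unmark, simp add: dlo, simp)
      apply (rule rs_plain, simp add: dlo, simp)
      apply (rule reach_gc_eq; simp)
      done
    define u where "u = s - (q + 3)"
    define t where "t = u div 3"
    have su: "s = q + 3 + u" using s unfolding u_def by simp
    have u_le: "u + 3 \<le> 3 * g" using assms(7) su by simp
    have u3: "u = 3 * t + u mod 3" unfolding t_def by simp
    have tg: "t + 1 \<le> g" using u_le u3 by linarith
    have r2: "reach MM w (gc 16 (q + 3) (2 * (q + 1)) (S - {q}) (S - {q}) (insert q D) None (mv + 5))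
     (gc 16 (q + 3 + 3 * t) (2 * (q + 1 + t)) (S - {q}) (S - {q}) (insert q D) None (mv + 5 + 5 * t))"
      apply (rule loopE[where t = "t" and d = "q + 1"])
      subgoal for x using assms(4)[of x] tg by simp
      subgoal for x using assms(8)[of x] u3 su by simp
      using assms(10) tg su u3 by simp_all
    have "u mod 3 = 0 \<or> u mod 3 = 1 \<or> u mod 3 = 2" by auto
    moreover
    { assume m: "u mod 3 = 0"
      have sp: "s = q + 3 + 3 * t" using u3 m su by simp
      have ts: "tape w (q + 3 + 3 * t) \<noteq> Sym Lb" using assms(9) sp by simp
      have "RJ w (gc 16 (q + 3 + 3 * t) (2 * (q + 1 + t)) (S - {q}) (S - {q}) (insert q D) None (mv + 5 + 5 * t)) (mv + 5 * g + 4)"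
        using ts tg
        apply -
        apply (rule rj_gc, simp add: dlo, simp)
        done
      then have ?thesis by (rule RJ_reach[OF reach_trans[OF r1 r2]]) }
    moreover
    { assume m: "u mod 3 = 1"
      have sp: "s = Suc (q + 3 + 3 * t)" using u3 m su by simp
      have tg2: "t + 2 \<le> g" using u_le u3 m by linarith
      have nm: "q + 1 + t \<notin> S - {q}" using assms(4)[of "q + 1 + t"] tg2 by simp
      have tb: "tape w (q + 3 + 3 * t) = Sym Lb" using assms(8)[of "q + 3 + 3 * t"] sp by simp
      have ts: "tape w (Suc (q + 3 + 3 * t)) \<noteq> Sym Lb" using assms(9) sp by simp
      have le: "Suc (q + 3 + 3 * t) \<le> length w + 1" using assms(10) sp by simp
      have "RJ w (gc 16 (q + 3 + 3 * t) (2 * (q + 1 + t)) (S - {q}) (S - {q}) (insert q D) None (mv + 5 + 5 * t)) (mv + 5 * g + 4)"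
        using nm tb ts le tg2
        apply -
        apply (rule RJ_plain, simp add: dlo, simp)
        apply (rule rj_gc, simp add: dlo, simp)
        done
      then have ?thesis by (rule RJ_reach[OF reach_trans[OF r1 r2]]) }
    moreover
    { assume m: "u mod 3 = 2"
      have sp: "s = Suc (Suc (q + 3 + 3 * t))" using u3 m su by simp
      have tg2: "t + 2 \<le> g" using u_le u3 m by linarith
      have nm: "q + 1 + t \<notin> S - {q}" using assms(4)[of "q + 1 + t"] tg2 by simp
      have tb: "tape w (q + 3 + 3 * t) = Sym Lb" "tape w (Suc (q + 3 + 3 * t)) = Sym Lb"
        using assms(8)[of "q + 3 + 3 * t"] assms(8)[of "Suc (q + 3 + 3 * t)"] sp by simp_all
      have ts: "tape w (Suc (Suc (q + 3 + 3 * t))) \<noteq> Sym Lb" using assms(9) sp by simp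
      have le: "Suc (Suc (q + 3 + 3 * t)) \<le> length w + 1" using assms(10) sp by simp
      have "RJ w (gc 16 (q + 3 + 3 * t) (2 * (q + 1 + t)) (S - {q}) (S - {q}) (insert q D) None (mv + 5 + 5 * t)) (mv + 5 * g + 4)"
        using nm tb ts le tg2
        apply -
        apply (rule RJ_plain, simp add: dlo, simp)
        apply (rule RJ_plain, simp add: dlo, simp)
        apply (rule rj_gc, simp add: dlo, simp)
        done
      then have ?thesis by (rule RJ_reach[OF reach_trans[OF r1 r2]]) }
    ultimately have ?thesis by fastforce }
  ultimately show ?thesis by blast
qed

lemma b_ok:
  assumes "\<And>x. n < x \<Longrightarrow> x \<le> h \<Longrightarrow> tape w x = Sym Lb" "tape w n = Sym La" "h \<le> length w" "n \<le> h"
    "\<And>x. n < x \<Longrightarrow> x < d \<Longrightarrow> x \<notin> S" "n < d" "n \<in> S" "d \<le> length w"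
  shows "reach MM w (gc 17 h (2 * d) S S D None mv) (gc 10 n (2 * n) S S D None (mv + (h - n) + 2 * (d - n)))"
proof -
  have r1: "reach MM w (gc 17 h (2 * d) S S D None mv) (gc 17 n (2 * d) S S D None (mv + (h - n)))"
    apply (rule loopB1[where t = "h - n"])
    subgoal for x using assms(1)[of x] assms(4) by simp
    using assms(3,4) by simp_all
  have r2: "reach MM w (gc 17 n (2 * d) S S D None (mv + (h - n))) (gc 22 n (2 * (d - 1)) S S D None (mv + (h - n) + 2))"
    using assms
    apply -
    apply (rule rs_plain, simp add: dlo, simp)
    apply (rule rs_plain, simp add: dlo, simp)
    apply (rule reach_gc_eq; simp)
    done
  have r3: "reach MM w (gc 22 n (2 * (d - 1)) S S D None (mv + (h - n) + 2)) (gc 22 n (2 * n) S S D None (mv + (h - n) + 2 + 2 * (d - 1 - n)))"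
    apply (rule loopB2[where t = "d - 1 - n" and b = n])
    subgoal for x using assms(5)[of x] assms(6) by simp
    using assms(6,8) by simp_all
  have r4: "reach MM w (gc 22 n (2 * n) S S D None (mv + (h - n) + 2 + 2 * (d - 1 - n))) (gc 10 n (2 * n) S S D None (mv + (h - n) + 2 * (d - n)))"
    using assms
    apply -
    apply (rule rs_plain, simp add: dlo, simp)
    apply (rule reach_gc_eq; simp)
    done
  show ?thesis by (rule reach_trans[OF reach_trans[OF reach_trans[OF r1 r2] r3] r4])
qed

definition SS :: "nat \<Rightarrow> nat \<Rightarrow> nat set" where
  "SS n i = {x. n - i < x \<and> x \<le> n} \<union> {n + 2 ^ (i - 1), n + 2 ^ i}"
definition DD :: "nat \<Rightarrow> nat \<Rightarrow> nat set" where
  "DD n i = {n + 2 ^ j | j. Suc j < i}"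
definition mvs :: "nat \<Rightarrow> nat \<Rightarrow> nat" where
  "mvs n i = 3 * n + 3 * i * (i - 1) + 8 * 2 ^ i - 12"

lemma init_gc: "init MM w = gc 0 0 0 {} {} {} None 0"
  by (simp add: init_def MM_def gc_def mst_def cntf_def fun_eq_iff)

locale tp =
  fixes w :: "ab list" and n k :: nat
  assumes n1: "1 \<le> n" and k1: "1 \<le> k"
  and ta: "\<And>p. 1 \<le> p \<Longrightarrow> p \<le> n \<Longrightarrow> tape w p = Sym La"
  and tb: "\<And>p. n < p \<Longrightarrow> p \<le> n + k \<Longrightarrow> tape w p = Sym Lb"
  and ts: "tape w (Suc (n + k)) \<noteq> Sym Lb"
  and tl: "n + k \<le> length w"
begin

lemma start2: "reach MM w (gc 0 0 0 {} {} {} None 0) (gc 2 (Suc n) 0 {} {} {} None (Suc n))"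
proof -
  have t1: "tape w 1 = Sym La" using ta n1 by simp
  have L: "Suc n \<le> length w" using tl k1 by simp
  have wne: "w \<noteq> []" using L by auto
  have r1: "reach MM w (gc 0 0 0 {} {} {} None 0) (gc 2 2 0 {} {} {} None 2)"
    using t1 L wne
    apply -
    apply (rule rs_plain, simp add: dlo, simp)
    apply (rule rs_plain, simp add: dlo, simp)
    apply (rule reach_gc_eq; simp)
    done
  have r2: "reach MM w (gc 2 2 0 {} {} {} None 2) (gc 2 (Suc n) 0 {} {} {} None (Suc n))"
    apply (rule loop2[where t = "n - 1"])
    subgoal for x using ta[of x] by simp
    using L n1 by simp_all
  show ?thesis by (rule reach_trans[OF r1 r2])
qed

lemma setup_ok:
  assumes "2 \<le> k"
  shows "reach MM w (gc 0 0 0 {} {} {} None 0) (gc 10 n (2 * n) (SS n 1) (SS n 1) (DD n 1) None (mvs n 1))"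
proof -
  have tn: "tape w n = Sym La" "tape w (Suc n) = Sym Lb" "tape w (Suc (Suc n)) = Sym Lb"
    using ta[of n] tb[of "Suc n"] tb[of "Suc (Suc n)"] n1 assms by simp_all
  have L: "Suc (Suc n) \<le> length w" using tl assms by simp
  have r3: "reach MM w (gc 2 (Suc n) 0 {} {} {} None (Suc n))
     (gc 9 n 2 {n, Suc n, Suc (Suc n)} {n, Suc n, Suc (Suc n)} {} None (n + 6))"
    using tn L n1
    apply -
    apply (rule rs_tog, simp add: dlo, simp)
    apply (rule rs_close_mark, simp add: dlo, simp)
    apply (rule rs_tog, simp add: dlo, simp)
    apply (rule rs_close_mark, simp add: dlo, simp)
    apply (rule rs_tog, simp add: dlo, simp)
    apply (rule rs_close_mark, simp add: dlo, simp)
    apply (rule reach_gc_eq; auto)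
    done
  have r4: "reach MM w (gc 9 n 2 {n, Suc n, Suc (Suc n)} {n, Suc n, Suc (Suc n)} {} None (n + 6))
     (gc 9 n (2 * n) {n, Suc n, Suc (Suc n)} {n, Suc n, Suc (Suc n)} {} None (n + 6 + 2 * (n - 1)))"
    apply (rule loop9[where t = "n - 1" and d = 1])
    using L n1 by auto
  have e: "SS n (Suc 0) = {n, Suc n, Suc (Suc n)}" "DD n (Suc 0) = {}"
    using n1 by (auto simp: SS_def DD_def)
  have r5: "reach MM w (gc 9 n (2 * n) {n, Suc n, Suc (Suc n)} {n, Suc n, Suc (Suc n)} {} None (n + 6 + 2 * (n - 1)))
     (gc 10 n (2 * n) (SS n 1) (SS n 1) (DD n 1) None (mvs n 1))"
    using L n1
    apply -
    apply (rule rs_plain, simp add: dlo, simp)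
    apply (rule reach_gc_eq; simp add: e mvs_def)
    done
  show ?thesis
    by (rule reach_trans[OF reach_trans[OF reach_trans[OF start2 r3] r4] r5])
qed

lemma setup_rej:
  assumes "k = 1"
  shows "RJ w (gc 0 0 0 {} {} {} None 0) (mvs n 1)"
proof -
  have tn: "tape w (Suc n) = Sym Lb" "tape w (Suc (Suc n)) \<noteq> Sym Lb"
    using tb[of "Suc n"] ts n1 assms by simp_all
  have L: "Suc n \<le> length w" using tl assms by simp
  have "RJ w (gc 2 (Suc n) 0 {} {} {} None (Suc n)) (mvs n 1)"
    using tn L
    apply -
    apply (rule RJ_tog, simp add: dlo, simp)
    apply (rule rj_gc, simp add: dlo, simp add: mvs_def)
    done
  then show ?thesis by (rule RJ_reach[OF start2])
qed

end
context tp begin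

lemma SS_mem: "x \<in> SS n (Suc m) \<longleftrightarrow> (n - Suc m < x \<and> x \<le> n) \<or> x = n + 2 ^ m \<or> x = n + 2 * 2 ^ m"
  by (auto simp: SS_def)

lemma DD_mem: "x \<in> DD n (Suc m) \<longleftrightarrow> (\<exists>j<m. x = n + 2 ^ j)"
  by (auto simp: DD_def)

lemma pw_lt: "j < m \<Longrightarrow> (2::nat) ^ j < 2 ^ m"
  by simp

lemma iter_pre:
  assumes "Suc m < n" "2 ^ Suc m \<le> k"
  shows "reach MM w (gc 10 n (2 * n) (SS n (Suc m)) (SS n (Suc m)) (DD n (Suc m)) None mv)
    (gc 13 (n + 2 ^ m) (2 * (n + 2 ^ m)) (insert (n - Suc m) (SS n (Suc m))) (insert (n - Suc m) (SS n (Suc m)))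
      (DD n (Suc m)) None (mv + 6 * Suc m + 3 * 2 ^ m))"
proof -
  let ?S = "SS n (Suc m)" and ?D = "DD n (Suc m)"
  let ?x = "n - Suc m"
  have gk: "2 ^ m \<le> k" using assms(2) by (metis le_trans one_le_numeral pw_lt less_imp_le lessI power_Suc2 mult_le_mono2 mult.right_neutral)
  have L: "n + 2 ^ m \<le> length w" using tl gk by simp
  have r1: "reach MM w (gc 10 n (2 * n) ?S ?S ?D None mv) (gc 10 ?x (2 * ?x) ?S ?S ?D None (mv + 3 * Suc m))"
    apply (rule loopC[where t = "Suc m"])
    subgoal for x using assms(1) by (simp add: SS_mem)
    using assms(1) L by simp_all
  have xS: "?x \<notin> ?S" "?x \<notin> ?D" using assms(1) by (auto simp: SS_mem DD_mem)
  have tx: "tape w ?x = Sym La" using ta[of ?x] assms(1) by simp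
  have r2: "reach MM w (gc 10 ?x (2 * ?x) ?S ?S ?D None (mv + 3 * Suc m))
     (gc 13 (Suc ?x) (2 * Suc ?x) (insert ?x ?S) (insert ?x ?S) ?D None (mv + 3 * Suc m + 3))"
    using xS tx assms(1) L tl k1
    apply -
    apply (rule rs_tog, simp add: dlo, (simp, (intro conjI; linarith)?))
    apply (rule rs_close_mark, simp add: dlo, simp)
    apply (rule reach_gc_eq; simp)
    done
  have r3: "reach MM w (gc 13 (Suc ?x) (2 * Suc ?x) (insert ?x ?S) (insert ?x ?S) ?D None (mv + 3 * Suc m + 3))
     (gc 13 (n + 2 ^ m) (2 * (n + 2 ^ m)) (insert ?x ?S) (insert ?x ?S) ?D None (mv + 6 * Suc m + 3 * 2 ^ m))"
    apply (rule loopF[where t = "n + 2 ^ m - Suc ?x"])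
    subgoal for x
    proof -
      assume a: "Suc (n - Suc m) \<le> x" "x < Suc (n - Suc m) + (n + 2 ^ m - Suc (n - Suc m))"
      show ?thesis
      proof (cases "x \<le> n")
        case True then show ?thesis using ta[of x] a assms(1) by simp
      next
        case False
        then have "x < n + 2 ^ m" using a assms(1) by simp
        then show ?thesis using tb[of x] False gk by (auto simp: SS_mem)
      qed
    qed
    using assms(1) L by simp_all
  show ?thesis by (rule reach_trans[OF reach_trans[OF r1 r2] r3])
qed

end
context tp begin

lemma iter_ok:
  assumes "Suc m < n" "2 ^ Suc (Suc m) \<le> k"
  shows "reach MM w (gc 10 n (2 * n) (SS n (Suc m)) (SS n (Suc m)) (DD n (Suc m)) None mv)
    (gc 10 n (2 * n) (SS n (Suc (Suc m))) (SS n (Suc (Suc m))) (DD n (Suc (Suc m))) None (mv + 6 * Suc m + 8 * 2 ^ Suc m))"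
proof -
  let ?S1 = "insert (n - Suc m) (SS n (Suc m))" and ?D = "DD n (Suc m)"
  define g :: nat where "g = 2 ^ m"
  have g1: "1 \<le> g" unfolding g_def by simp
  have k4: "4 * g \<le> k" using assms(2) unfolding g_def by simp
  have L: "n + 4 * g \<le> length w" using tl k4 by simp
  have p1: "reach MM w (gc 10 n (2 * n) (SS n (Suc m)) (SS n (Suc m)) ?D None mv)
    (gc 13 (n + g) (2 * (n + g)) ?S1 ?S1 ?D None (mv + 6 * Suc m + 3 * g))"
    unfolding g_def by (rule iter_pre) (use assms in simp_all)
  have S1m: "x \<in> ?S1 \<longleftrightarrow> x = n - Suc m \<or> (n - Suc m < x \<and> x \<le> n) \<or> x = n + g \<or> x = n + 2 * g" for x
    unfolding g_def by (auto simp: SS_mem)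
  have SSg: "x \<in> SS n (Suc m) \<longleftrightarrow> (n - Suc m < x \<and> x \<le> n) \<or> x = n + g \<or> x = n + 2 * g" for x
    unfolding g_def by (simp add: SS_mem)
  have Dm: "x \<in> ?D \<longleftrightarrow> (\<exists>j<m. x = n + 2 ^ j)" for x by (simp add: DD_mem)
  have nD: "\<not> (\<exists>j<m. n + g = n + 2 ^ j)" "\<not> (\<exists>j<m. n + 4 * g = n + 2 ^ j)"
  proof -
    show "\<not> (\<exists>j<m. n + g = n + 2 ^ j)" unfolding g_def using pw_lt by fastforce
    show "\<not> (\<exists>j<m. n + 4 * g = n + 2 ^ j)"
    proof
      assume "\<exists>j<m. n + 4 * g = n + 2 ^ j"
      then obtain j where "j < m" "4 * g = 2 ^ j" by auto
      moreover have "(2::nat) ^ j < 2 ^ m" using \<open>j < m\<close> by simp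
      ultimately show False unfolding g_def by simp
    qed
  qed
  have p2: "reach MM w (gc 13 (n + g) (2 * (n + g)) ?S1 ?S1 ?D None (mv + 6 * Suc m + 3 * g))
    (gc 17 (n + g + 3 * g - 2) (2 * (n + g + g)) (insert (n + g + 3 * g) (?S1 - {n + g}))
      (insert (n + g + 3 * g) (?S1 - {n + g})) (insert (n + g) ?D) None (mv + 6 * Suc m + 3 * g + 5 * g + 2))"
    apply (rule ext_ok)
    using g1 nD assms(1) k4 L by (simp_all add: SSg Dm tb)
  let ?S2 = "insert (n + g + 3 * g) (?S1 - {n + g})" and ?D2 = "insert (n + g) ?D"
  have p3: "reach MM w (gc 17 (n + g + 3 * g - 2) (2 * (n + g + g)) ?S2 ?S2 ?D2 None (mv + 6 * Suc m + 3 * g + 5 * g + 2))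
    (gc 10 n (2 * n) ?S2 ?S2 ?D2 None (mv + 6 * Suc m + 3 * g + 5 * g + 2 + (n + g + 3 * g - 2 - n) + 2 * (n + g + g - n)))"
    apply (rule b_ok)
    subgoal for x using tb[of x] k4 by simp
    using ta[of n] n1 L g1 assms(1) by (auto simp: SSg)
  have eS: "?S2 = SS n (Suc (Suc m))"
    using assms(1) g1 unfolding g_def by (auto simp: SS_def)
  have eD: "?D2 = DD n (Suc (Suc m))"
    unfolding g_def by (auto simp: DD_def less_Suc_eq)
  have em: "mv + 6 * Suc m + 3 * g + 5 * g + 2 + (n + g + 3 * g - 2 - n) + 2 * (n + g + g - n) = mv + 6 * Suc m + 8 * 2 ^ Suc m"
    using g1 unfolding g_def by simp
  show ?thesis
    using reach_trans[OF reach_trans[OF p1 p2] p3] unfolding eS eD em .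
qed

lemma iter_rej:
  assumes "Suc m < n" "2 ^ Suc m \<le> k" "k < 2 ^ Suc (Suc m)"
  shows "RJ w (gc 10 n (2 * n) (SS n (Suc m)) (SS n (Suc m)) (DD n (Suc m)) None mv) (mv + 6 * Suc m + 8 * 2 ^ Suc m)"
proof -
  let ?S1 = "insert (n - Suc m) (SS n (Suc m))" and ?D = "DD n (Suc m)"
  define g :: nat where "g = 2 ^ m"
  have g1: "1 \<le> g" unfolding g_def by simp
  have k2: "2 * g \<le> k" "k < 4 * g" using assms(2,3) unfolding g_def by simp_all
  have p1: "reach MM w (gc 10 n (2 * n) (SS n (Suc m)) (SS n (Suc m)) ?D None mv)
    (gc 13 (n + g) (2 * (n + g)) ?S1 ?S1 ?D None (mv + 6 * Suc m + 3 * g))"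
    unfolding g_def by (rule iter_pre) (use assms in simp_all)
  have S1m: "x \<in> ?S1 \<longleftrightarrow> x = n - Suc m \<or> (n - Suc m < x \<and> x \<le> n) \<or> x = n + g \<or> x = n + 2 * g" for x
    unfolding g_def by (auto simp: SS_mem)
  have SSg: "x \<in> SS n (Suc m) \<longleftrightarrow> (n - Suc m < x \<and> x \<le> n) \<or> x = n + g \<or> x = n + 2 * g" for x
    unfolding g_def by (simp add: SS_mem)
  have Dm: "x \<in> ?D \<longleftrightarrow> (\<exists>j<m. x = n + 2 ^ j)" for x by (simp add: DD_mem)
  have nD: "\<not> (\<exists>j<m. n + g = n + 2 ^ j)"
    unfolding g_def using pw_lt by fastforce
  have p2: "RJ w (gc 13 (n + g) (2 * (n + g)) ?S1 ?S1 ?D None (mv + 6 * Suc m + 3 * g))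
     (mv + 6 * Suc m + 3 * g + 5 * g + 4)"
    apply (rule ext_rej[where s = "Suc (n + k)"])
    using g1 nD assms(1) k2 ts tl by (simp_all add: SSg Dm tb)
  have "RJ w (gc 10 n (2 * n) (SS n (Suc m)) (SS n (Suc m)) ?D None mv) (mv + 6 * Suc m + 3 * g + 5 * g + 4)"
    by (rule RJ_reach[OF p1 p2])
  then show ?thesis
    by (rule RJ_mono) (use g1 in \<open>simp add: g_def\<close>)
qed

end
lemma gc_sel [simp]: "moves (gc q h j S C D r mv) = mv" "st (gc q h j S C D r mv) = q"
  by (simp_all add: gc_def)

lemma acc_gc: "accepting_conf MM w (gc 24 h (Suc (2 * d)) S C D None mv)"
  by (simp add: accepting_conf_def gc_def MM_def out_K0 mst_def)

context tp begin

lemma final_lem: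
  assumes "n = Suc m" "2 ^ n \<le> k"
  shows "if k = 2 ^ n \<and> length w = n + k
    then AC w (gc 10 n (2 * n) (SS n n) (SS n n) (DD n n) None mv) (mv + 6 * n + 3 * 2 ^ n + 2)
    else RJ w (gc 10 n (2 * n) (SS n n) (SS n n) (DD n n) None mv) (mv + 6 * n + 3 * 2 ^ n + 2)"
proof -
  define g :: nat where "g = 2 ^ m"
  have g1: "1 \<le> g" unfolding g_def by simp
  have k2: "2 * g \<le> k" using assms unfolding g_def by simp
  have pn: "(2::nat) ^ n = 2 * g" using assms(1) unfolding g_def by simp
  let ?S = "SS n n" and ?D = "DD n n"
  have SSg: "x \<in> ?S \<longleftrightarrow> (0 < x \<and> x \<le> n) \<or> x = n + g \<or> x = n + 2 * g" for x
    using assms(1) unfolding g_def by (auto simp: SS_def)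
  have L: "n + 2 * g \<le> length w" using tl k2 by simp
  have r1: "reach MM w (gc 10 n (2 * n) ?S ?S ?D None mv) (gc 10 0 0 ?S ?S ?D None (mv + 3 * n))"
    apply (rule loopC[where t = n and b = 0])
    using L by (simp_all add: SSg)
  have r2: "reach MM w (gc 10 0 0 ?S ?S ?D None (mv + 3 * n)) (gc 20 1 2 ?S ?S ?D None (mv + 3 * n + 3))"
    using L n1
    apply -
    apply (rule rs_plain, simp add: dlo SSg, simp)
    apply (rule rs_plain, simp add: dlo, simp)
    apply (rule reach_gc_eq; simp)
    done
  have r3: "reach MM w (gc 20 1 2 ?S ?S ?D None (mv + 3 * n + 3)) (gc 20 (n + g) (2 * (n + g)) ?S ?S ?D None (mv + 3 * n + 3 + 3 * (n + g - 1)))"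
    apply (rule loopG2[where t = "n + g - 1"])
    subgoal for x
      using ta[of x] tb[of x] k2 by (cases "x \<le> n") (auto simp: SSg)
    using L g1 by simp_all
  have r4: "reach MM w (gc 20 (n + g) (2 * (n + g)) ?S ?S ?D None (mv + 3 * n + 3 + 3 * (n + g - 1)))
     (gc 23 (Suc (n + g)) (2 * Suc (n + g)) ?S ?S ?D None (mv + 3 * n + 3 + 3 * (n + g - 1) + 3))"
    using L g1 tb[of "n + g"] k2
    apply -
    apply (rule rs_plain, simp add: dlo SSg, simp)
    apply (rule rs_plain, simp add: dlo, simp)
    apply (rule reach_gc_eq; simp)
    done
  have r5: "reach MM w (gc 23 (Suc (n + g)) (2 * Suc (n + g)) ?S ?S ?D None (mv + 3 * n + 3 + 3 * (n + g - 1) + 3))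
     (gc 23 (n + 2 * g) (2 * (n + 2 * g)) ?S ?S ?D None (mv + 3 * n + 3 + 3 * (n + g - 1) + 3 + 3 * (g - 1)))"
    apply (rule loopG3[where t = "g - 1"])
    subgoal for x
      using tb[of x] k2 by (auto simp: SSg)
    using L g1 by simp_all
  have r6: "reach MM w (gc 23 (n + 2 * g) (2 * (n + 2 * g)) ?S ?S ?D None (mv + 3 * n + 3 + 3 * (n + g - 1) + 3 + 3 * (g - 1)))
     (gc 26 (Suc (n + 2 * g)) (Suc (2 * (n + 2 * g))) ?S ?S ?D None (mv + 6 * n + 3 * 2 ^ n + 2))"
    using L g1 tb[of "n + 2 * g"] k2
    apply -
    apply (rule rs_plain, simp add: dlo SSg, simp)
    apply (rule reach_gc_eq; simp add: pn)
    done
  have R: "reach MM w (gc 10 n (2 * n) ?S ?S ?D None mv) (gc 26 (Suc (n + 2 * g)) (Suc (2 * (n + 2 * g))) ?S ?S ?D None (mv + 6 * n + 3 * 2 ^ n + 2))"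
    by (rule reach_trans[OF reach_trans[OF reach_trans[OF reach_trans[OF reach_trans[OF r1 r2] r3] r4] r5] r6])
  show ?thesis
  proof (cases "k = 2 ^ n \<and> length w = n + k")
    case True
    have td: "tape w (Suc (n + 2 * g)) = Dollar" using True pn by (simp add: tape_def)
    have "reach MM w (gc 26 (Suc (n + 2 * g)) (Suc (2 * (n + 2 * g))) ?S ?S ?D None (mv + 6 * n + 3 * 2 ^ n + 2))
       (gc 24 (Suc (n + 2 * g)) (Suc (2 * (n + 2 * g))) ?S ?S ?D None (mv + 6 * n + 3 * 2 ^ n + 2))"
      using td
      apply -
      apply (rule rs_plain, simp add: dlo, simp)
      apply (rule reach_gc_eq; simp)
      done
    then have R2: "reach MM w (gc 10 n (2 * n) ?S ?S ?D None mv) (gc 24 (Suc (n + 2 * g)) (Suc (2 * (n + 2 * g))) ?S ?S ?D None (mv + 6 * n + 3 * 2 ^ n + 2))"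
      by (rule reach_trans[OF R])
    have "AC w (gc 10 n (2 * n) ?S ?S ?D None mv) (mv + 6 * n + 3 * 2 ^ n + 2)"
      unfolding AC_def
      apply (rule exI[of _ "gc 24 (Suc (n + 2 * g)) (Suc (2 * (n + 2 * g))) ?S ?S ?D None (mv + 6 * n + 3 * 2 ^ n + 2)"])
      using R2 acc_gc[of w "Suc (n + 2 * g)" "n + 2 * g"] by (simp add: halting_gc)
    then show ?thesis unfolding if_P[OF True] .
  next
    case False
    have le: "Suc (n + 2 * g) \<le> length w" using False tl k2 pn by auto
    have td: "tape w (Suc (n + 2 * g)) \<noteq> Dollar" using le by (simp add: tape_def)
    have "RJ w (gc 26 (Suc (n + 2 * g)) (Suc (2 * (n + 2 * g))) ?S ?S ?D None (mv + 6 * n + 3 * 2 ^ n + 2))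
       (mv + 6 * n + 3 * 2 ^ n + 2)"
      using td by (intro rj_gc) (simp_all add: dlo)
    then show ?thesis unfolding if_not_P[OF False] by (rule RJ_reach[OF R])
  qed
qed

lemma mvs_Suc: "1 \<le> i \<Longrightarrow> mvs n (Suc i) = mvs n i + 6 * i + 8 * 2 ^ i"
proof -
  assume "1 \<le> i"
  then obtain j where i: "i = Suc j" by (cases i) auto
  have p: "(2::nat) ^ j \<ge> 1" by simp
  have p16: "(12::nat) \<le> 16 * 2 ^ j" using p by linarith
  have a: "mvs n i + 12 = 3 * n + 3 * i * (i - 1) + 8 * 2 ^ i"
    unfolding mvs_def i using p16 by (simp add: le_add_diff_inverse2)
  have b: "mvs n (Suc i) + 12 = 3 * n + 3 * Suc i * i + 8 * 2 ^ Suc i"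
    unfolding mvs_def i using p16 by (simp add: le_add_diff_inverse2)
  have c: "3 * Suc i * i = 3 * i * (i - 1) + 6 * i" unfolding i by (simp add: algebra_simps)
  show ?thesis using a b c by simp
qed

lemma mvs_mono: "1 \<le> i \<Longrightarrow> mvs n i \<le> mvs n (Suc i)"
  using mvs_Suc by simp

lemma phase_all:
  "1 \<le> i \<Longrightarrow> i \<le> n \<Longrightarrow>
    (2 ^ i \<le> k \<and> reach MM w (gc 0 0 0 {} {} {} None 0) (gc 10 n (2 * n) (SS n i) (SS n i) (DD n i) None (mvs n i)))
    \<or> (k < 2 ^ i \<and> RJ w (gc 0 0 0 {} {} {} None 0) (mvs n i))"
proof (induction i rule: nat_induct_at_least)
  case base
  show ?case
  proof (cases "2 \<le> k")
    case True then show ?thesis using setup_ok by simp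
  next
    case False then have "k = 1" using k1 by simp
    then show ?thesis using setup_rej by simp
  qed
next
  case (Suc i)
  obtain m where m: "i = Suc m" using Suc.hyps by (cases i) auto
  have lt: "Suc m < n" using Suc.prems m by simp
  from Suc.IH Suc.prems Suc.hyps have IH: "(2 ^ i \<le> k \<and> reach MM w (gc 0 0 0 {} {} {} None 0) (gc 10 n (2 * n) (SS n i) (SS n i) (DD n i) None (mvs n i)))
    \<or> (k < 2 ^ i \<and> RJ w (gc 0 0 0 {} {} {} None 0) (mvs n i))" by simp
  then show ?case
  proof
    assume a: "2 ^ i \<le> k \<and> reach MM w (gc 0 0 0 {} {} {} None 0) (gc 10 n (2 * n) (SS n i) (SS n i) (DD n i) None (mvs n i))"
    show ?case
    proof (cases "2 ^ Suc i \<le> k")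
      case True
      have it: "reach MM w (gc 10 n (2 * n) (SS n i) (SS n i) (DD n i) None (mvs n i))
         (gc 10 n (2 * n) (SS n (Suc i)) (SS n (Suc i)) (DD n (Suc i)) None (mvs n i + 6 * i + 8 * 2 ^ i))"
        unfolding m by (rule iter_ok) (use lt True m in simp_all)
      show ?thesis using reach_trans[OF conjunct2[OF a] it] True mvs_Suc[OF Suc.hyps] by simp
    next
      case False
      have it: "RJ w (gc 10 n (2 * n) (SS n i) (SS n i) (DD n i) None (mvs n i)) (mvs n i + 6 * i + 8 * 2 ^ i)"
        unfolding m by (rule iter_rej) (use lt False a m in simp_all)
      show ?thesis using RJ_reach[OF conjunct2[OF a] it] False mvs_Suc[OF Suc.hyps] by simp
    qed
  next
    assume a: "k < 2 ^ i \<and> RJ w (gc 0 0 0 {} {} {} None 0) (mvs n i)"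
    have "k < 2 ^ Suc i" using a by simp
    moreover have "RJ w (gc 0 0 0 {} {} {} None 0) (mvs n (Suc i))"
      using a RJ_mono mvs_mono[OF Suc.hyps] by blast
    ultimately show ?case by simp
  qed
qed

definition BB :: nat where "BB = mvs n n + 6 * n + 3 * 2 ^ n + 2"

lemma main:
  "if k = 2 ^ n \<and> length w = n + k then AC w (init MM w) BB else RJ w (init MM w) BB"
proof -
  obtain m where m: "n = Suc m" using n1 by (cases n) auto
  have P: "(2 ^ n \<le> k \<and> reach MM w (gc 0 0 0 {} {} {} None 0) (gc 10 n (2 * n) (SS n n) (SS n n) (DD n n) None (mvs n n)))
    \<or> (k < 2 ^ n \<and> RJ w (gc 0 0 0 {} {} {} None 0) (mvs n n))"
    using phase_all[of n] n1 by simp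
  then show ?thesis
  proof
    assume a: "2 ^ n \<le> k \<and> reach MM w (gc 0 0 0 {} {} {} None 0) (gc 10 n (2 * n) (SS n n) (SS n n) (DD n n) None (mvs n n))"
    have F: "if k = 2 ^ n \<and> length w = n + k
    then AC w (gc 10 n (2 * n) (SS n n) (SS n n) (DD n n) None (mvs n n)) BB
    else RJ w (gc 10 n (2 * n) (SS n n) (SS n n) (DD n n) None (mvs n n)) BB"
      using final_lem[OF m, of "mvs n n"] a unfolding BB_def by simp
    show ?thesis
    proof (cases "k = 2 ^ n \<and> length w = n + k")
      case True
      have "AC w (gc 10 n (2 * n) (SS n n) (SS n n) (DD n n) None (mvs n n)) BB"
        using F unfolding if_P[OF True] .
      then show ?thesis unfolding if_P[OF True] init_gc by (rule AC_reach[OF conjunct2[OF a]])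
    next
      case False
      have "RJ w (gc 10 n (2 * n) (SS n n) (SS n n) (DD n n) None (mvs n n)) BB"
        using F unfolding if_not_P[OF False] .
      then show ?thesis unfolding if_not_P[OF False] init_gc by (rule RJ_reach[OF conjunct2[OF a]])
    qed
  next
    assume a: "k < 2 ^ n \<and> RJ w (gc 0 0 0 {} {} {} None 0) (mvs n n)"
    have "RJ w (gc 0 0 0 {} {} {} None 0) BB" by (rule RJ_mono[OF conjunct2[OF a]]) (simp add: BB_def)
    moreover have "\<not> (k = 2 ^ n \<and> length w = n + k)" using a by simp
    ultimately show ?thesis unfolding init_gc by (simp only: if_False if_not_P)
  qed
qed

end

lemma AC_mono: "AC w c B \<Longrightarrow> B \<le> B' \<Longrightarrow> AC w c B'"
  unfolding AC_def using le_trans by blast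

lemma reach_exec: "reach MM w (init MM w) c \<Longrightarrow> \<exists>t. exec MM w t = c"
  unfolding reach_def exec_nxt by blast

lemma AC_res: "AC w (init MM w) B \<Longrightarrow> accepts MM w \<and> runs_within MM w B"
  unfolding AC_def accepts_def runs_within_def using reach_exec by blast

lemma RJ_res: "RJ w (init MM w) B \<Longrightarrow> rejects MM w \<and> runs_within MM w B"
  unfolding RJ_def rejects_def runs_within_def using reach_exec by blast

lemma wf_MM: "wf_oia MM"
  unfolding wf_oia_def MM_def by (auto simp: dl_def Let_def)

lemma decomp: "\<exists>n k r. w = replicate n La @ replicate k Lb @ r \<and> (r = [] \<or> (\<exists>r'. r = La # r')) \<and> (k = 0 \<longrightarrow> r = [])"
proof (induction w)
  case Nil then show ?case by (rule exI[of _ 0], rule exI[of _ 0]) simp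
next
  case (Cons x w)
  then obtain n k r where w: "w = replicate n La @ replicate k Lb @ r" "r = [] \<or> (\<exists>r'. r = La # r')" "k = 0 \<longrightarrow> r = []"
    by blast
  show ?case
  proof (cases x)
    case La
    then show ?thesis using w by (intro exI[of _ "Suc n"] exI[of _ k] exI[of _ r]) simp
  next
    case Lb
    show ?thesis
    proof (cases n)
      case 0
      then show ?thesis using w Lb by (intro exI[of _ 0] exI[of _ "Suc k"] exI[of _ r]) simp
    next
      case (Suc n')
      then show ?thesis using w Lb
        by (intro exI[of _ 0] exI[of _ 1] exI[of _ w]) simp
    qed
  qed
qed

lemma tw_repl: "takeWhile (\<lambda>x. x = a) (replicate n a @ ys) = replicate n a @ takeWhile (\<lambda>x. x = a) ys"
  by (induction n) auto

lemma tw_rep: "takeWhile (\<lambda>x. x = La) (replicate n La @ replicate k Lb @ r) = replicate n La"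
  if "r = [] \<or> (\<exists>r'. r = La # r')" "k = 0 \<longrightarrow> r = []"
  using that by (cases k) (auto simp: tw_repl)

lemma tw_rep2: "takeWhile (\<lambda>x. x = Lb) (replicate k Lb @ r) = replicate k Lb"
  if "r = [] \<or> (\<exists>r'. r = La # r')"
  using that by (auto simp: tw_repl)

lemma memL:
  assumes "w = replicate n La @ replicate k Lb @ r" "r = [] \<or> (\<exists>r'. r = La # r')" "k = 0 \<longrightarrow> r = []"
  shows "w \<in> {replicate n La @ replicate (2 ^ n) Lb | n. True} \<longleftrightarrow> k = 2 ^ n \<and> r = []"
proof
  assume "w \<in> {replicate n La @ replicate (2 ^ n) Lb | n. True}"
  then obtain n' where w': "w = replicate n' La @ replicate (2 ^ n') Lb @ []" by auto
  have e1: "replicate n La = replicate n' La"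
    using tw_rep[of r k n] tw_rep[of "[]" "2 ^ n'" n'] assms w' by simp
  then have nn: "n = n'" by simp
  then have e2: "replicate k Lb @ r = replicate (2 ^ n') Lb @ []" using assms(1) w' by simp
  have "replicate k Lb = replicate (2 ^ n') Lb"
    using arg_cong[OF e2, of "takeWhile (\<lambda>x. x = Lb)"] tw_rep2[of r k] tw_rep2[of "[]" "2 ^ n'"] assms(2) by simp
  then have "k = 2 ^ n'" by simp
  then show "k = 2 ^ n \<and> r = []" using e2 nn by simp
next
  assume "k = 2 ^ n \<and> r = []"
  then show "w \<in> {replicate n La @ replicate (2 ^ n) Lb | n. True}" using assms(1) by auto
qed

definition BBf :: "nat \<Rightarrow> nat" where "BBf n = mvs n n + 6 * n + 3 * 2 ^ n + 2 + n + 3"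

lemma acc_gc0: "accepting_conf MM w (gc 24 h 0 {} C D None mv)"
  by (simp add: accepting_conf_def gc_def MM_def out_K0 mst_def)

lemma case_k0: "RJ (replicate n La) (init MM (replicate n La)) (n + 1)"
proof (cases n)
  case 0
  then show ?thesis unfolding init_gc
    apply -
    apply (rule RJ_plain, simp add: dlo, simp)
    apply (rule rj_gc, simp add: dlo tape_def, simp)
    done
next
  case (Suc n')
  let ?w = "replicate n La"
  have t1: "tape ?w 1 = Sym La" using Suc by (simp add: tape_def)
  have r1: "reach MM ?w (gc 0 0 0 {} {} {} None 0) (gc 2 2 0 {} {} {} None 2)"
    using t1 Suc
    apply -
    apply (rule rs_plain, simp add: dlo, simp)
    apply (rule rs_plain, simp add: dlo, simp)
    apply (rule reach_gc_eq; simp)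
    done
  have r2: "reach MM ?w (gc 2 2 0 {} {} {} None 2) (gc 2 (Suc n) 0 {} {} {} None (Suc n))"
    apply (rule loop2[where t = "n - 1"])
    using Suc by (auto simp: tape_def)
  have r3: "RJ ?w (gc 2 (Suc n) 0 {} {} {} None (Suc n)) (n + 1)"
    by (rule rj_gc) (simp_all add: dlo tape_def)
  show ?thesis unfolding init_gc by (rule RJ_reach[OF reach_trans[OF r1 r2] r3])
qed

lemma case_n0:
  assumes "w = replicate k Lb @ r" "1 \<le> k" "r = [] \<or> (\<exists>r'. r = La # r')"
  shows "if k = 1 \<and> r = [] then AC w (init MM w) 2 else RJ w (init MM w) 2"
proof -
  have t1: "tape w 1 = Sym Lb" using assms by (cases k) (auto simp: tape_def)
  have L: "1 \<le> length w" using assms by simp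
  have wne: "w \<noteq> []" using L by auto
  have r1: "reach MM w (gc 0 0 0 {} {} {} None 0) (gc 3 2 0 {} {} {} None 2)"
    using t1 L wne
    apply -
    apply (rule rs_plain, simp add: dlo, simp)
    apply (rule rs_plain, simp add: dlo, simp)
    apply (rule reach_gc_eq; simp)
    done
  show ?thesis
  proof (cases "k = 1 \<and> r = []")
    case True
    then have t2: "tape w 2 = Dollar" using assms by (simp add: tape_def)
    have "reach MM w (gc 3 2 0 {} {} {} None 2) (gc 24 2 0 {} {} {} None 2)"
      using t2
      apply -
      apply (rule rs_plain, simp add: dlo, simp)
      apply (rule reach_gc_eq; simp)
      done
    then have R2: "reach MM w (gc 0 0 0 {} {} {} None 0) (gc 24 2 0 {} {} {} None 2)"
      by (rule reach_trans[OF r1])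
    have "AC w (gc 0 0 0 {} {} {} None 0) 2"
      unfolding AC_def
      apply (rule exI[of _ "gc 24 2 0 {} {} {} None 2"])
      using R2 acc_gc0[of w 2 "{}" "{}" 2] by (simp add: halting_gc)
    then show ?thesis using True unfolding init_gc by simp
  next
    case False
    have t2: "tape w 2 \<noteq> Dollar"
    proof (cases "k = 1")
      case True
      then obtain r' where "r = La # r'" using False assms(3) by auto
      then show ?thesis using assms True by (simp add: tape_def)
    next
      case False
      then have "2 \<le> k" using assms(2) by simp
      then show ?thesis using assms by (simp add: tape_def nth_append)
    qed
    have "RJ w (gc 3 2 0 {} {} {} None 2) 2"
      using t2 by (intro rj_gc) (simp_all add: dlo)
    then have "RJ w (gc 0 0 0 {} {} {} None 0) 2" by (rule RJ_reach[OF r1])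
    then show ?thesis unfolding if_not_P[OF False] init_gc .
  qed
qed

lemma result:
  assumes "w = replicate n La @ replicate k Lb @ r" "r = [] \<or> (\<exists>r'. r = La # r')" "k = 0 \<longrightarrow> r = []"
  shows "if k = 2 ^ n \<and> r = [] then AC w (init MM w) (BBf n) else RJ w (init MM w) (BBf n)"
proof (cases "k = 0")
  case True
  then have w: "w = replicate n La" and r: "r = []" using assms by simp_all
  have "RJ w (init MM w) (n + 1)" unfolding w by (rule case_k0)
  then have "RJ w (init MM w) (BBf n)" by (rule RJ_mono) (simp add: BBf_def)
  moreover have c: "\<not> (k = 2 ^ n \<and> r = [])" using True by simp
  ultimately show ?thesis unfolding if_not_P[OF c] by simp
next
  case k0: False
  show ?thesis
  proof (cases "n = 0")
    case True
    have w: "w = replicate k Lb @ r" using assms True by simp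
    have C: "if k = 1 \<and> r = [] then AC w (init MM w) 2 else RJ w (init MM w) 2"
      by (rule case_n0[OF w _ assms(2)]) (use k0 in simp)
    show ?thesis
    proof (cases "k = 1 \<and> r = []")
      case c: True
      have "AC w (init MM w) 2" using C unfolding if_P[OF c] .
      then have "AC w (init MM w) (BBf n)" by (rule AC_mono) (simp add: BBf_def)
      moreover have c2: "k = 2 ^ n \<and> r = []" using c True by simp
      ultimately show ?thesis unfolding if_P[OF c2] by simp
    next
      case c: False
      have "RJ w (init MM w) 2" using C unfolding if_not_P[OF c] .
      then have "RJ w (init MM w) (BBf n)" by (rule RJ_mono) (simp add: BBf_def)
      moreover have c2: "\<not> (k = 2 ^ n \<and> r = [])" using c True by simp
      ultimately show ?thesis unfolding if_not_P[OF c2] by simp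
    qed
  next
    case n0: False
    have len: "length w = n + k + length r" using assms(1) by simp
    interpret tp w n k
    proof
      show "1 \<le> n" using n0 by simp
      show "1 \<le> k" using k0 by simp
      show "tape w p = Sym La" if "1 \<le> p" "p \<le> n" for p
      proof -
        have "p - 1 < n" "p \<le> length w" using that len by simp_all
        then show ?thesis using that assms(1) by (simp add: tape_def nth_append)
      qed
      show "tape w p = Sym Lb" if "n < p" "p \<le> n + k" for p
      proof -
        have "\<not> p - 1 < n" "p - 1 - n < k" "p \<le> length w" "p \<noteq> 0" using that len by simp_all
        then show ?thesis using assms(1) by (simp add: tape_def nth_append)
      qed
      show "tape w (Suc (n + k)) \<noteq> Sym Lb"
        using assms(2) len assms(1) by (auto simp: tape_def nth_append)
      show "n + k \<le> length w" using len by simp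
    qed
    have eq: "(k = 2 ^ n \<and> length w = n + k) = (k = 2 ^ n \<and> r = [])" using len by simp
    have M: "if k = 2 ^ n \<and> r = [] then AC w (init MM w) BB else RJ w (init MM w) BB"
      using main unfolding eq .
    have le: "BB \<le> BBf n" by (simp add: BB_def BBf_def)
    show ?thesis
    proof (cases "k = 2 ^ n \<and> r = []")
      case c: True
      have "AC w (init MM w) BB" using M unfolding if_P[OF c] .
      then show ?thesis unfolding if_P[OF c] by (rule AC_mono[OF _ le])
    next
      case c: False
      have "RJ w (init MM w) BB" using M unfolding if_not_P[OF c] .
      then show ?thesis unfolding if_not_P[OF c] by (rule RJ_mono[OF _ le])
    qed
  qed
qed

lemma sq_le: "4 \<le> n \<Longrightarrow> n * n \<le> (2::nat) ^ n"
proof (induction n rule: nat_induct_at_least)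
  case base then show ?case by simp
next
  case (Suc n)
  have h4: "4 * n \<le> n * n" using Suc.hyps by (simp add: mult_le_mono1)
  have "Suc n * Suc n = n * n + 2 * n + 1" by simp
  also have "\<dots> \<le> n * n + n * n" using h4 Suc.hyps by linarith
  also have "\<dots> \<le> 2 ^ n + 2 ^ n" using Suc.IH by simp
  finally show ?case by simp
qed

lemma BBf_le: "4 \<le> n \<Longrightarrow> BBf n \<le> 30 * 2 ^ n"
proof -
  assume n: "4 \<le> n"
  have a: "n * (n - 1) \<le> n * n" by simp
  have b: "n \<le> n * n" by simp
  have c: "n * n \<le> 2 ^ n" using sq_le[OF n] .
  have m: "mvs n n \<le> 3 * n + 3 * (n * n) + 8 * 2 ^ n"
    unfolding mvs_def using a by (simp add: algebra_simps)
  have e: "1 \<le> n * n" using n by (simp add: Suc_le_eq)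
  have "BBf n \<le> 11 * 2 ^ n + 3 * (n * n) + 10 * n + 5"
    unfolding BBf_def using m by linarith
  then show ?thesis using b c e by linarith
qed

theorem corollary2:
  shows "\<exists>M :: ab oia. wf_oia M
     \<and> recognizes M {replicate n La @ replicate (2 ^ n) Lb | n. True}
     \<and> (\<exists>(c::nat) n0. \<forall>n \<ge> n0. \<forall>m. runs_within M (replicate n La @ replicate m Lb) (c * 2 ^ n))"
proof (intro exI conjI)
  show "wf_oia MM" by (rule wf_MM)
  show "recognizes MM {replicate n La @ replicate (2 ^ n) Lb | n. True}"
    unfolding recognizes_def
  proof (intro allI conjI impI)
    fix w :: "ab list"
    obtain n k r where d: "w = replicate n La @ replicate k Lb @ r" "r = [] \<or> (\<exists>r'. r = La # r')" "k = 0 \<longrightarrow> r = []"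
      using decomp by blast
    note R = result[OF d]
    note memR = memL[OF d]
    show "accepts MM w" if "w \<in> {replicate n La @ replicate (2 ^ n) Lb | n. True}"
    proof -
      have c: "k = 2 ^ n \<and> r = []" using that memR by simp
      show ?thesis using R unfolding if_P[OF c] by (rule AC_res[THEN conjunct1])
    qed
    show "rejects MM w" if "w \<notin> {replicate n La @ replicate (2 ^ n) Lb | n. True}"
    proof -
      have c: "\<not> (k = 2 ^ n \<and> r = [])" using that memR by simp
      show ?thesis using R unfolding if_not_P[OF c] by (rule RJ_res[THEN conjunct1])
    qed
  qed
  show "\<forall>n \<ge> 4. \<forall>m. runs_within MM (replicate n La @ replicate m Lb) (30 * 2 ^ n)"
  proof (intro allI impI)
    fix n m :: nat
    assume n: "4 \<le> n"
    let ?w = "replicate n La @ replicate m Lb"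
    have d: "?w = replicate n La @ replicate m Lb @ []" by simp
    have d2: "([]::ab list) = [] \<or> (\<exists>r'. ([]::ab list) = La # r')" by simp
    have d3: "m = 0 \<longrightarrow> ([]::ab list) = []" by simp
    note R = result[OF d d2 d3]
    have "runs_within MM ?w (BBf n)"
    proof (cases "m = 2 ^ n \<and> ([]::ab list) = []")
      case True
      show ?thesis using R unfolding if_P[OF True] by (rule AC_res[THEN conjunct2])
    next
      case False
      show ?thesis using R unfolding if_not_P[OF False] by (rule RJ_res[THEN conjunct2])
    qed
    then show "runs_within MM ?w (30 * 2 ^ n)"
      unfolding runs_within_def using BBf_le[OF n] le_trans by blast
  qed
qed

end
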